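(* Let $R=(v_1,\dots,v_\ell)$ be a route, $\bar y\in\mathbb{R}^{[N]\times V_+}_{\ge0}$ and $\xi\in[N]$. There exist $f\in\mathbb{R}^A_{\ge0}$ and $g\in\mathbb{R}^{V_+}_{\ge0}$ satisfying $f_{(v_{i-1},v_i)}+d^\xi(v_i)=f_{(v_i,v_{i+1})}+g_{v_i}$ for all $i\in[\ell]$, $f_{(v_{i-1},v_i)}\le C$ for all $i\in[\ell+1]$, and $g_{v_i}\le C\,\bar y^\xi_{v_i}$ for all $i\in[\ell]$, if and only if $$\bar y^\xi(R')\ge\frac{d^\xi(R')}{C}-1\quad\text{for all subroutes } R'\subseteq R.$$
   Context: $G=(V,E)$ complete undirected graph with $V=\{0\}\cup V_+$ ($0$ depot, $V_+$ customers); $D=(V,A)$ replaces each edge by two opposite arcs. Capacity $C\in\mathbb{Q}_{>0}$; scenarios $\xi\in[N]$ with demand vectors $d^\xi\in\mathbb{Q}^{V_+}_{\ge0}$, $d^\xi(v)\le C$. A route $R=(v_1,\dots,v_\ell)$ is the cycle $0,v_1,\dots,v_\ell,0$ through distinct customers, $V_+(R)=\{v_1,\dots,v_\ell\}$, $v_0=v_{\ell+1}=0$. A subroute of $R$ is $R'=(v_i,\dots,v_j)$ with $1\le i\le j\le\ell$. For a vector $f$, $f(S)=\sum_{i\in S}f(i)$; $\bar y^\xi(R')=\sum_{v\in V_+(R')}\bar y^\xi_v$ and $d^\xi(R')=d^\xi(V_+(R'))$. *)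

theory Defs
  imports Complex_Main
begin

text \<open>Vertices are natural numbers; the depot is 0; V is the finite vertex set
  of the complete graph, customers are V - {0}. Arcs of D are ordered pairs of
  distinct vertices.\<close>

definition customers :: "nat set \<Rightarrow> nat set" where
  "customers V = V - {0}"

definition arcs :: "nat set \<Rightarrow> (nat \<times> nat) set" where
  "arcs V = {(u, v). u \<in> V \<and> v \<in> V \<and> u \<noteq> v}"

definition is_route :: "nat set \<Rightarrow> nat list \<Rightarrow> bool" where
  "is_route V R \<longleftrightarrow> R \<noteq> [] \<and> distinct R \<and> set R \<subseteq> customers V"

text \<open>node R i = v_i, with v_0 = v_(l+1) = 0 (the depot).\<close>
definition node :: "nat list \<Rightarrow> nat \<Rightarrow> nat" where
  "node R i = (if i = 0 \<or> i > length R then 0 else R ! (i - 1))"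

definition subroute_set :: "nat list \<Rightarrow> nat \<Rightarrow> nat \<Rightarrow> nat set" where
  "subroute_set R i j = node R ` {i..j}"

end

theory Submission
  imports Defs
begin

lemma telescope:
  fixes phi d g :: "nat \<Rightarrow> real"
  assumes "\<And>m. i \<le> m \<Longrightarrow> m < i + n \<Longrightarrow> phi m + d m = phi (Suc m) + g m"
  shows "phi i + (\<Sum>m\<in>{i..<i+n}. d m) = phi (i+n) + (\<Sum>m\<in>{i..<i+n}. g m)"
  using assms
proof (induction n)
  case 0 then show ?case by simp
next
  case (Suc n)
  have IH: "phi i + (\<Sum>m\<in>{i..<i+n}. d m) = phi (i+n) + (\<Sum>m\<in>{i..<i+n}. g m)"
    using Suc.prems by (intro Suc.IH) auto
  have e: "phi (i+n) + d (i+n) = phi (Suc (i+n)) + g (i+n)" using Suc.prems by auto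
  show ?case using IH e by (simp add: algebra_simps)
qed

fun Fs :: "(nat \<Rightarrow> real) \<Rightarrow> nat \<Rightarrow> real" where
  "Fs a 0 = 0"
| "Fs a (Suc i) = max 0 (Fs a i + a (Suc i))"

lemma Fs_nonneg: "Fs a i \<ge> 0"
  by (cases i) auto

lemma Fs_repr: "\<exists>k. 1 \<le> k \<and> k \<le> i + 1 \<and> Fs a i = (\<Sum>m=k..i. a m)"
proof (induction i)
  case 0 then show ?case by (intro exI[of _ 1]) auto
next
  case (Suc i)
  then obtain k where k: "1 \<le> k" "k \<le> i + 1" "Fs a i = (\<Sum>m=k..i. a m)" by blast
  show ?case
  proof (cases "Fs a i + a (Suc i) \<le> 0")
    case True
    then show ?thesis by (intro exI[of _ "i+2"]) auto
  next
    case False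
    have "(\<Sum>m=k..Suc i. a m) = (\<Sum>m=k..i. a m) + a (Suc i)"
      using k by (simp add: atLeastAtMostSuc_conv)
    then show ?thesis using False k by (intro exI[of _ k]) auto
  qed
qed

theorem lemma2:
  fixes V :: "nat set" and N :: nat and C :: real
    and d :: "nat \<Rightarrow> nat \<Rightarrow> real"   \<comment> \<open>d \<xi> v = d^\<xi>(v)\<close>
    and ybar :: "nat \<Rightarrow> nat \<Rightarrow> real" \<comment> \<open>ybar \<xi> v = ybar^\<xi>_v\<close>
    and R :: "nat list" and \<xi> :: nat
  assumes finV: "finite V" and depot: "0 \<in> V"
    and Cpos: "C > 0" and Crat: "C \<in> \<rat>"
    and d_rat: "\<forall>s\<in>{1..N}. \<forall>v\<in>customers V. d s v \<in> \<rat>"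
    and d_nonneg: "\<forall>s\<in>{1..N}. \<forall>v\<in>customers V. d s v \<ge> 0"
    and d_le_C: "\<forall>s\<in>{1..N}. \<forall>v\<in>customers V. d s v \<le> C"
    and route: "is_route V R"
    and y_nonneg: "\<forall>s\<in>{1..N}. \<forall>v\<in>customers V. ybar s v \<ge> 0"
    and xi: "\<xi> \<in> {1..N}"
  shows "(\<exists>f :: nat \<times> nat \<Rightarrow> real. \<exists>g :: nat \<Rightarrow> real.
            (\<forall>a\<in>arcs V. f a \<ge> 0) \<and> (\<forall>v\<in>customers V. g v \<ge> 0) \<and>
            (\<forall>i\<in>{1..length R}.
               f (node R (i - 1), node R i) + d \<xi> (node R i)
                 = f (node R i, node R (i + 1)) + g (node R i)) \<and>
            (\<forall>i\<in>{1..length R + 1}. f (node R (i - 1), node R i) \<le> C) \<and>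
            (\<forall>i\<in>{1..length R}. g (node R i) \<le> C * ybar \<xi> (node R i)))
         \<longleftrightarrow>
         (\<forall>i j. 1 \<le> i \<and> i \<le> j \<and> j \<le> length R \<longrightarrow>
            (\<Sum>v\<in>subroute_set R i j. ybar \<xi> v)
              \<ge> (\<Sum>v\<in>subroute_set R i j. d \<xi> v) / C - 1)"
proof -
  define l where "l = length R"
  define nd where "nd = node R"
  have dist: "distinct R" and sub: "set R \<subseteq> customers V" and ne: "R \<noteq> []"
    using route by (auto simp: is_route_def)
  have nd_in: "nd i = R ! (i - 1)" if "i \<in> {1..l}" for i
    using that by (auto simp: nd_def node_def l_def)
  have nd_cust: "nd i \<in> customers V" if "i \<in> {1..l}" for i
    using that nd_in sub by (auto simp: l_def)
  have nd_ne0: "nd i \<noteq> 0" if "i \<in> {1..l}" for i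
    using nd_cust[OF that] by (auto simp: customers_def)
  have nd_0: "nd 0 = 0" "nd (Suc l) = 0" by (auto simp: nd_def node_def l_def)
  have nd_V: "nd i \<in> V" for i
  proof (cases "i \<in> {1..l}")
    case True then show ?thesis using nd_cust by (auto simp: customers_def)
  next
    case False then have "nd i = 0" by (auto simp: nd_def node_def l_def)
    then show ?thesis using depot by simp
  qed
  have inj: "inj_on nd {1..l}"
  proof (rule inj_onI)
    fix x y assume xy: "x \<in> {1..l}" "y \<in> {1..l}" "nd x = nd y"
    then have "R ! (x - 1) = R ! (y - 1)" using nd_in by simp
    then have "x - 1 = y - 1" using dist xy by (auto simp: l_def nth_eq_iff_index_eq)
    then show "x = y" using xy by auto
  qed
  have nd_arc: "(nd (i - 1), nd i) \<in> arcs V" if "i \<in> {1..l+1}" for i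
  proof -
    have "nd (i - 1) \<noteq> nd i"
    proof (cases "i = 1")
      case True
      have "1 \<in> {1..l}" using ne by (auto simp: l_def Suc_le_eq)
      then show ?thesis using True nd_0 nd_ne0[of 1] by auto
    next
      case F1: False
      show ?thesis
      proof (cases "i = l + 1")
        case True then show ?thesis using nd_0 nd_ne0[of l] F1 by auto
      next
        case False
        then have "i \<in> {1..l}" "i - 1 \<in> {1..l}" using that F1 by auto
        moreover have "i - 1 \<noteq> i" using that by auto
        ultimately show ?thesis using inj by (meson inj_on_contraD)
      qed
    qed
    then show ?thesis using nd_V by (auto simp: arcs_def)
  qed
  have reidx: "(\<Sum>v\<in>subroute_set R i j. h v) = (\<Sum>m=i..j. h (nd m))"
    if "1 \<le> i" "j \<le> l" for h :: "nat \<Rightarrow> real" and i j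
  proof -
    have "inj_on nd {i..j}" using inj_on_subset[OF inj] that by auto
    then show ?thesis unfolding subroute_set_def nd_def[symmetric]
      by (simp add: sum.reindex)
  qed
  have dnn: "d \<xi> (nd m) \<ge> 0" if "m \<in> {1..l}" for m
    using d_nonneg xi nd_cust[OF that] by auto
  have ynn: "ybar \<xi> (nd m) \<ge> 0" if "m \<in> {1..l}" for m
    using y_nonneg xi nd_cust[OF that] by auto
  show ?thesis
    unfolding l_def[symmetric] nd_def[symmetric]
  proof
    assume "\<exists>f g. (\<forall>a\<in>arcs V. f a \<ge> 0) \<and> (\<forall>v\<in>customers V. g v \<ge> 0) \<and>
            (\<forall>i\<in>{1..l}. f (nd (i - 1), nd i) + d \<xi> (nd i) = f (nd i, nd (i + 1)) + g (nd i)) \<and>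
            (\<forall>i\<in>{1..l + 1}. f (nd (i - 1), nd i) \<le> C) \<and>
            (\<forall>i\<in>{1..l}. g (nd i) \<le> C * ybar \<xi> (nd i))"
    then obtain f g where fnn: "\<forall>a\<in>arcs V. f a \<ge> 0"
      and eq: "\<forall>i\<in>{1..l}. f (nd (i - 1), nd i) + d \<xi> (nd i) = f (nd i, nd (i + 1)) + g (nd i)"
      and fC: "\<forall>i\<in>{1..l + 1}. f (nd (i - 1), nd i) \<le> C"
      and gC: "\<forall>i\<in>{1..l}. g (nd i) \<le> C * ybar \<xi> (nd i)" by blast
    define phi where "phi i = f (nd (i - 1), nd i)" for i
    show "\<forall>i j. 1 \<le> i \<and> i \<le> j \<and> j \<le> l \<longrightarrow>
            (\<Sum>v\<in>subroute_set R i j. ybar \<xi> v) \<ge> (\<Sum>v\<in>subroute_set R i j. d \<xi> v) / C - 1"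
    proof (intro allI impI)
      fix i j assume ij: "1 \<le> i \<and> i \<le> j \<and> j \<le> l"
      have tel: "phi i + (\<Sum>m\<in>{i..<i+(Suc j - i)}. d \<xi> (nd m))
          = phi (i+(Suc j - i)) + (\<Sum>m\<in>{i..<i+(Suc j - i)}. g (nd m))"
        apply (rule telescope)
        using eq ij by (auto simp: phi_def)
      have s1: "{i..<i+(Suc j - i)} = {i..j}" "i + (Suc j - i) = j + 1" using ij by auto
      have p0: "phi i \<ge> 0" using fnn nd_arc[of i] ij by (auto simp: phi_def)
      have pC: "phi (j+1) \<le> C" using fC ij unfolding phi_def by (metis Suc_eq_plus1 add_diff_cancel_right' atLeastAtMost_iff le_add2 add_le_mono1)
      have gs: "(\<Sum>m=i..j. g (nd m)) \<le> (\<Sum>m=i..j. C * ybar \<xi> (nd m))"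
        using gC ij by (intro sum_mono) auto
      have "(\<Sum>m=i..j. d \<xi> (nd m)) \<le> C + C * (\<Sum>m=i..j. ybar \<xi> (nd m))"
      proof -
        have t2: "phi i + (\<Sum>m=i..j. d \<xi> (nd m)) = phi (j+1) + (\<Sum>m=i..j. g (nd m))"
          using tel unfolding s1(2) by (simp add: atLeastLessThanSuc_atLeastAtMost)
        show ?thesis using t2 p0 pC gs by (simp add: sum_distrib_left)
      qed
      then have "(\<Sum>m=i..j. d \<xi> (nd m)) / C \<le> 1 + (\<Sum>m=i..j. ybar \<xi> (nd m))"
        using Cpos by (simp add: divide_le_eq algebra_simps)
      then show "(\<Sum>v\<in>subroute_set R i j. ybar \<xi> v) \<ge> (\<Sum>v\<in>subroute_set R i j. d \<xi> v) / C - 1"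
        using reidx ij by simp
    qed
  next
    assume cond: "\<forall>i j. 1 \<le> i \<and> i \<le> j \<and> j \<le> l \<longrightarrow>
            (\<Sum>v\<in>subroute_set R i j. ybar \<xi> v) \<ge> (\<Sum>v\<in>subroute_set R i j. d \<xi> v) / C - 1"
    define a where "a m = d \<xi> (nd m) - C * ybar \<xi> (nd m)" for m
    have aC: "(\<Sum>m=i..j. a m) \<le> C" if "1 \<le> i" "i \<le> j" "j \<le> l" for i j
    proof -
      have "(\<Sum>m=i..j. ybar \<xi> (nd m)) \<ge> (\<Sum>m=i..j. d \<xi> (nd m)) / C - 1"
        using cond that reidx by auto
      then have "(\<Sum>m=i..j. d \<xi> (nd m)) \<le> C * (\<Sum>m=i..j. ybar \<xi> (nd m)) + C"
        using Cpos by (simp add: divide_le_eq algebra_simps)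
      then show ?thesis by (simp add: a_def sum_subtractf sum_distrib_left)
    qed
    define F where "F = Fs a"
    have F0: "F i \<ge> 0" for i unfolding F_def by (rule Fs_nonneg)
    have FC: "F i \<le> C" if "i \<le> l" for i
    proof -
      obtain k where k: "1 \<le> k" "k \<le> i + 1" "F i = (\<Sum>m=k..i. a m)"
        using Fs_repr unfolding F_def by blast
      show ?thesis
      proof (cases "k = i + 1")
        case True then show ?thesis using k Cpos by simp
      next
        case False then show ?thesis using k aC[of k i] that by simp
      qed
    qed
    define idx where "idx v = (LEAST k. k < l \<and> R ! k = v)" for v
    have idx_nd: "idx (nd i) = i - 1" if "i \<in> {1..l}" for i
    proof -
      have "(LEAST k. k < l \<and> R ! k = R ! (i - 1)) = i - 1"
      proof (rule Least_equality)
        show "i - 1 < l \<and> R ! (i - 1) = R ! (i - 1)" using that by auto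
      next
        fix y assume "y < l \<and> R ! y = R ! (i - 1)"
        then have "y = i - 1" using dist that by (auto simp: l_def nth_eq_iff_index_eq)
        then show "i - 1 \<le> y" by simp
      qed
      then show ?thesis using nd_in[OF that] by (simp add: idx_def)
    qed
    define f where "f = (\<lambda>(u::nat, v::nat). if v = 0 then F l else F (idx v))"
    define g where "g v = (if v \<in> set R then F (idx v) + d \<xi> v - F (Suc (idx v)) else 0)" for v
    have fval: "f (nd (i - 1), nd i) = F (i - 1)" if "i \<in> {1..l+1}" for i
    proof (cases "i = l + 1")
      case True then show ?thesis using nd_0 by (simp add: f_def)
    next
      case False then have "i \<in> {1..l}" using that by auto
      then show ?thesis using nd_ne0[of i] idx_nd[of i] by (simp add: f_def)
    qed
    have ndR: "nd i \<in> set R" if "i \<in> {1..l}" for i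
      using nd_in[OF that] that by (auto simp: l_def)
    have gval: "g (nd i) = F (i - 1) + d \<xi> (nd i) - F i" if "i \<in> {1..l}" for i
      using ndR[OF that] idx_nd[OF that] that by (simp add: g_def)
    have g0: "g v \<ge> 0" if "v \<in> customers V" for v
    proof (cases "v \<in> set R")
      case True
      then obtain k where k: "k < l" "R ! k = v" by (auto simp: in_set_conv_nth l_def)
      have i1: "Suc k \<in> {1..l}" using k by auto
      have nv: "nd (Suc k) = v" using nd_in[OF i1] k by simp
      have "F (Suc k) \<le> F k + d \<xi> v"
      proof -
        have "0 \<le> F k + d \<xi> v" using F0[of k] dnn[OF i1] nv by simp
        moreover have "F k + a (Suc k) \<le> F k + d \<xi> v"
          using ynn[OF i1] Cpos nv by (simp add: a_def)
        ultimately show ?thesis by (simp add: F_def)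
      qed
      then show ?thesis using gval[OF i1] nv by simp
    next
      case False then show ?thesis by (simp add: g_def)
    qed
    show "\<exists>f g. (\<forall>a\<in>arcs V. f a \<ge> 0) \<and> (\<forall>v\<in>customers V. g v \<ge> 0) \<and>
            (\<forall>i\<in>{1..l}. f (nd (i - 1), nd i) + d \<xi> (nd i) = f (nd i, nd (i + 1)) + g (nd i)) \<and>
            (\<forall>i\<in>{1..l + 1}. f (nd (i - 1), nd i) \<le> C) \<and>
            (\<forall>i\<in>{1..l}. g (nd i) \<le> C * ybar \<xi> (nd i))"
    proof (intro exI[of _ f] exI[of _ g] conjI ballI)
      fix x assume "x \<in> arcs V" then show "f x \<ge> 0" using F0 by (auto simp: f_def split: prod.splits)
    next
      fix v assume "v \<in> customers V" then show "g v \<ge> 0" by (rule g0)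
    next
      fix i assume i: "i \<in> {1..l}"
      have "f (nd (Suc i - 1), nd (Suc i)) = F i" using fval[of "Suc i"] i by auto
      then show "f (nd (i - 1), nd i) + d \<xi> (nd i) = f (nd i, nd (i + 1)) + g (nd i)"
        using fval[of i] gval[OF i] i by simp
    next
      fix i assume i: "i \<in> {1..l+1}"
      then show "f (nd (i - 1), nd i) \<le> C" using fval[OF i] FC[of "i - 1"] by auto
    next
      fix i assume i: "i \<in> {1..l}"
      obtain k where k: "i = Suc k" using i by (cases i) auto
      have "F (Suc k) \<ge> F k + a (Suc k)" by (simp add: F_def)
      then show "g (nd i) \<le> C * ybar \<xi> (nd i)" using gval[OF i] k by (simp add: a_def)
    qed
  qed
qed

end
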